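(* There exists $\overline x>0$ such that $\mu(x)-rU(x)>0$ for $x\in[0,\overline x)$ and $\mu(x)-rU(x)<0$ for $x\in(\overline x,\infty)$. Moreover $\overline x\ge u^*$ and $\mathcal LU(m)-rU(m)>0$ for all $m\in[u^*,\overline x)$.
   Context: Let $\mu,\sigma$ be real functions defined on an interval $\mathcal I=(\alpha,\infty)$ with $-\infty\le\alpha<0$, with $\sigma>0$, and let $r>0$. Assume: $\mu$ and $\sigma$ are $C^1$ with Lipschitz derivatives, $\mu(0)>rU(0)$ and $\sup_{x\ge0}\mu'(x)<r$. The function $U:[0,\infty)\to[0,\infty)$ is nondecreasing, concave and twice continuously differentiable on $[0,\infty)$, and there is $u^*\ge0$ with $U'(m)\ge1$ for $m\le u^*$, $U'(m)=1$ for $m\ge u^*$, and $\mathcal LU(m)-rU(m)>0$ for all $m\in[0,u^* )$, where $\mathcal Lh(x)=\mu(x)h'(x)+\tfrac12\sigma^2(x)h''(x)$. *)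

theory Defs
  imports "HOL-Analysis.Analysis"
begin

definition gen :: "(real \<Rightarrow> real) \<Rightarrow> (real \<Rightarrow> real) \<Rightarrow> (real \<Rightarrow> real) \<Rightarrow> (real \<Rightarrow> real) \<Rightarrow> real \<Rightarrow> real" where
  "gen \<mu> \<sigma> h' h'' x = \<mu> x * h' x + 1/2 * (\<sigma> x)^2 * h'' x"

end

theory Submission
  imports Defs
begin

theorem lemma2:
  fixes \<alpha> :: ereal and \<mu> \<sigma> \<mu>' \<sigma>' U U' U'' :: "real \<Rightarrow> real" and r u\<^sub>s Lm Ls :: real
  assumes \<alpha>_neg: "\<alpha> < 0"
    and \<sigma>_pos: "\<And>x. \<alpha> < ereal x \<Longrightarrow> \<sigma> x > 0"
    and r_pos: "r > 0"
    and \<mu>_deriv: "\<And>x. \<alpha> < ereal x \<Longrightarrow> (\<mu> has_real_derivative \<mu>' x) (at x)"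
    and \<mu>'_lip: "Lm-lipschitz_on {x. \<alpha> < ereal x} \<mu>'"
    and \<sigma>_deriv: "\<And>x. \<alpha> < ereal x \<Longrightarrow> (\<sigma> has_real_derivative \<sigma>' x) (at x)"
    and \<sigma>'_lip: "Ls-lipschitz_on {x. \<alpha> < ereal x} \<sigma>'"
    and \<mu>0: "\<mu> 0 > r * U 0"
    and sup_\<mu>': "\<exists>c<r. \<forall>x\<ge>0. \<mu>' x \<le> c"
    and U_nonneg: "\<And>x. x \<ge> 0 \<Longrightarrow> U x \<ge> 0"
    and U_mono: "mono_on {0..} U"
    and U_concave: "concave_on {0..} U"
    and U_deriv: "\<And>x. x \<ge> 0 \<Longrightarrow> (U has_real_derivative U' x) (at x within {0..})"
    and U'_deriv: "\<And>x. x \<ge> 0 \<Longrightarrow> (U' has_real_derivative U'' x) (at x within {0..})"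
    and U''_cont: "continuous_on {0..} U''"
    and u_nonneg: "u\<^sub>s \<ge> 0"
    and U'_ge1: "\<And>m. 0 \<le> m \<Longrightarrow> m \<le> u\<^sub>s \<Longrightarrow> U' m \<ge> 1"
    and U'_eq1: "\<And>m. m \<ge> u\<^sub>s \<Longrightarrow> U' m = 1"
    and LU_pos: "\<And>m. 0 \<le> m \<Longrightarrow> m < u\<^sub>s \<Longrightarrow> gen \<mu> \<sigma> U' U'' m - r * U m > 0"
  shows "\<exists>xb>0. (\<forall>x. 0 \<le> x \<and> x < xb \<longrightarrow> \<mu> x - r * U x > 0)
              \<and> (\<forall>x>xb. \<mu> x - r * U x < 0)
              \<and> xb \<ge> u\<^sub>s
              \<and> (\<forall>m. u\<^sub>s \<le> m \<and> m < xb \<longrightarrow> gen \<mu> \<sigma> U' U'' m - r * U m > 0)"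
proof -
  obtain c where c: "c < r" "\<And>x. x \<ge> 0 \<Longrightarrow> \<mu>' x \<le> c" using sup_\<mu>' by blast
  define f where "f = (\<lambda>x. \<mu> x - r * U x)"
  have alpha_lt: "\<alpha> < ereal x" if "x \<ge> 0" for x
    using \<alpha>_neg that by (metis ereal_less_eq(3) order_less_le_trans zero_ereal_def)
  have U'1: "U' x \<ge> 1" if "x \<ge> 0" for x
    using U'_ge1 U'_eq1 that by (cases "x \<le> u\<^sub>s") auto
  have contU: "continuous_on {0..} U"
    unfolding continuous_on_eq_continuous_within
    using DERIV_continuous[OF U_deriv] by auto
  have contU': "continuous_on {0..} U'"
    unfolding continuous_on_eq_continuous_within
    using DERIV_continuous[OF U'_deriv] by auto
  have contmu: "continuous_on {0..} \<mu>"
    by (meson DERIV_isCont alpha_lt \<mu>_deriv atLeast_iff continuous_at_imp_continuous_on)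
  have contsig: "continuous_on {0..} \<sigma>"
    by (meson DERIV_isCont alpha_lt \<sigma>_deriv atLeast_iff continuous_at_imp_continuous_on)
  have contf: "continuous_on {0..} f"
    unfolding f_def by (intro continuous_on_diff contmu continuous_on_mult continuous_on_const contU)
  have derf: "(f has_real_derivative (\<mu>' x - r * U' x)) (at x)" if "x > 0" for x
  proof -
    have "(U has_real_derivative U' x) (at x within {0<..})"
      by (rule DERIV_subset[OF U_deriv]) (use that in auto)
    moreover have "at x within {0<..} = at x"
      using that by (intro at_within_open) auto
    ultimately have "(U has_real_derivative U' x) (at x)" by simp
    then have "((\<lambda>x. r * U x) has_real_derivative r * U' x) (at x)"
      by (rule DERIV_cmult)
    then show ?thesis unfolding f_def
      using DERIV_diff[OF \<mu>_deriv[OF alpha_lt[of x]]] that by simp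
  qed
  define g where "g = (\<lambda>x. f x - (c - r) * x)"
  have gdec: "g b \<le> g a" if "0 \<le> a" "a \<le> b" for a b
  proof (rule DERIV_nonpos_imp_decreasing_open[OF that(2)])
    fix x assume x: "a < x" "x < b"
    have "(g has_real_derivative (\<mu>' x - r * U' x - (c - r))) (at x)"
      unfolding g_def using DERIV_diff[OF derf[of x] DERIV_cmult[where c="c - r", OF DERIV_ident]] x that by simp
    moreover have "\<mu>' x - r * U' x - (c - r) \<le> 0"
    proof -
      have "\<mu>' x \<le> c" using c x that by auto
      moreover have "r * 1 \<le> r * U' x" using U'1[of x] x that r_pos by (intro mult_left_mono) auto
      ultimately show ?thesis by simp
    qed
    ultimately show "\<exists>y. (g has_real_derivative y) (at x) \<and> y \<le> 0" by blast
  next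
    show "continuous_on {a..b} g" unfolding g_def
      by (intro continuous_on_diff continuous_on_mult continuous_on_const continuous_on_id continuous_on_subset[OF contf]) (use that in auto)
  qed
  have fdec: "f b \<le> f a + (c - r) * (b - a)" if "0 \<le> a" "a \<le> b" for a b
    using gdec[OF that] unfolding g_def by (simp add: algebra_simps)
  have fstrict: "f b < f a" if "0 \<le> a" "a < b" for a b
  proof -
    have "(c - r) * (b - a) < 0" using c that by (intro mult_neg_pos) auto
    then show ?thesis using fdec[of a b] that by auto
  qed
  have U''0: "U'' m = 0" if "m > u\<^sub>s" for m
  proof -
    have "(U' has_real_derivative U'' m) (at m within {0<..})"
      by (rule DERIV_subset[OF U'_deriv]) (use that u_nonneg in auto)
    moreover have "at m within {0<..} = at m"
      using that u_nonneg by (intro at_within_open) auto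
    ultimately have d1: "(U' has_real_derivative U'' m) (at m)" by simp
    have "((\<lambda>_. 1) has_real_derivative 0) (at m)" by simp
    then have d2: "(U' has_real_derivative 0) (at m)"
    proof (rule has_field_derivative_transform_within_open[where S="{u\<^sub>s<..}"])
      show "open {u\<^sub>s<..}" by simp
      show "m \<in> {u\<^sub>s<..}" using that by simp
      show "\<And>x. x \<in> {u\<^sub>s<..} \<Longrightarrow> 1 = U' x" using U'_eq1 by auto
    qed
    show ?thesis using DERIV_unique[OF d1 d2] .
  qed
  have U''0': "U'' m = 0" if "m \<ge> u\<^sub>s" for m
  proof (rule ccontr)
    assume ne: "U'' m \<noteq> 0"
    have "continuous (at m within {0..}) U''"
      using U''_cont that u_nonneg by (simp add: continuous_on_eq_continuous_within)
    then obtain d where d: "d > 0" "\<And>x'. x' \<in> {0..} \<Longrightarrow> dist x' m < d \<Longrightarrow> dist (U'' x') (U'' m) < \<bar>U'' m\<bar>"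
      unfolding continuous_within_eps_delta using ne by (metis zero_less_abs_iff)
    have "dist (U'' (m + d/2)) (U'' m) < \<bar>U'' m\<bar>"
      using d that u_nonneg by (intro d(2)) (auto simp: dist_real_def)
    moreover have "U'' (m + d/2) = 0" using U''0[of "m + d/2"] d that by auto
    ultimately show False by (simp add: dist_real_def)
  qed
  define h where "h = (\<lambda>m. gen \<mu> \<sigma> U' U'' m - r * U m)"
  have hf: "h m = f m" if "m \<ge> u\<^sub>s" for m
    unfolding h_def f_def gen_def using U''0'[OF that] U'_eq1[OF that] by simp
  have fus: "f u\<^sub>s \<ge> 0"
  proof (cases "u\<^sub>s = 0")
    case True
    then show ?thesis using \<mu>0 unfolding f_def by simp
  next
    case False
    then have upos: "u\<^sub>s > 0" using u_nonneg by simp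
    show ?thesis
    proof (rule ccontr)
      assume neg: "\<not> f u\<^sub>s \<ge> 0"
      have "continuous_on {0..} h" unfolding h_def gen_def
        by (intro continuous_on_diff continuous_on_add continuous_on_mult continuous_on_const continuous_on_power contmu contsig contU contU' U''_cont)
      then have "continuous (at u\<^sub>s within {0..}) h"
        using u_nonneg by (simp add: continuous_on_eq_continuous_within)
      then obtain d where d: "d > 0" "\<And>x'. x' \<in> {0..} \<Longrightarrow> dist x' u\<^sub>s < d \<Longrightarrow> dist (h x') (h u\<^sub>s) < - f u\<^sub>s"
        unfolding continuous_within_eps_delta using neg by (metis neg_0_less_iff_less not_le)
      define m where "m = max 0 (u\<^sub>s - d/2)"
      have m: "0 \<le> m" "m < u\<^sub>s" "dist m u\<^sub>s < d" using d upos unfolding m_def by (auto simp: dist_real_def)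
      have "dist (h m) (h u\<^sub>s) < - f u\<^sub>s" using d(2)[of m] m by auto
      moreover have "h m > 0" using LU_pos[OF m(1,2)] unfolding h_def .
      moreover have "h u\<^sub>s = f u\<^sub>s" using hf by simp
      ultimately show False using neg by (simp add: dist_real_def)
    qed
  qed
  define B where "B = f 0 / (r - c) + 1"
  have f0: "f 0 > 0" using \<mu>0 unfolding f_def by simp
  have Bpos: "B > 0" unfolding B_def using f0 c by (smt (verit) divide_pos_pos)
  have "f B \<le> f 0 + (c - r) * B" using fdec[of 0 B] Bpos by simp
  also have "\<dots> = - (r - c)" unfolding B_def using c by (simp add: field_simps)
  finally have fB: "f B < 0" using c by simp
  obtain xb where xb: "0 \<le> xb" "xb \<le> B" "f xb = 0"
    using IVT2'[of f B 0 0] fB f0 Bpos continuous_on_subset[OF contf, of "{0..B}"] by auto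
  have xbpos: "xb > 0" using xb f0 by (cases "xb = 0") auto
  have P1: "\<forall>x. 0 \<le> x \<and> x < xb \<longrightarrow> \<mu> x - r * U x > 0"
    using fstrict xb unfolding f_def by (metis less_le_trans le_less_trans order_refl)
  have P2: "\<forall>x>xb. \<mu> x - r * U x < 0"
    using fstrict xb unfolding f_def by (metis less_le_trans le_less_trans order_refl)
  have P3: "xb \<ge> u\<^sub>s"
  proof (rule ccontr)
    assume "\<not> xb \<ge> u\<^sub>s"
    then have "f u\<^sub>s < f xb" using fstrict[of xb u\<^sub>s] xb by simp
    then show False using fus xb by simp
  qed
  have P4: "\<forall>m. u\<^sub>s \<le> m \<and> m < xb \<longrightarrow> gen \<mu> \<sigma> U' U'' m - r * U m > 0"
  proof (intro allI impI)
    fix m assume m: "u\<^sub>s \<le> m \<and> m < xb"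
    then have "f m > 0" using fstrict[of m xb] xb u_nonneg by simp
    then show "gen \<mu> \<sigma> U' U'' m - r * U m > 0" using hf[of m] m unfolding h_def by simp
  qed
  show ?thesis using xbpos P1 P2 P3 P4 by blast
qed

end
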